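(* For every signed permutation $\pi\in\mathfrak{B}_n$, \[\sum_{k\ge0}\Omega'_B(\pi;k)\,t^k=\frac{(1+t)^n}{(1-t)^{n+1}}\left(\frac{2t}{1+t}\right)^{\varsigma(\pi)}\left(\frac{4t}{(1+t)^2}\right)^{\operatorname{pe}_B(\pi)}=\left(\frac12\right)^{\varsigma(\pi)}\frac{(1+t)^{n+\varsigma(\pi)}}{(1-t)^{n+1}}\left(\frac{4t}{(1+t)^2}\right)^{\operatorname{pe}_B(\pi)+\varsigma(\pi)}.\]
   Context: $\mathfrak{B}_n$ is the group of signed permutations (bijections $\pi$ of $\{-n,\dots,n\}$ with $\pi(-i)=-\pi(i)$), written as words $(\pi(1),\dots,\pi(n))$, with $\pi(0)=0$. A peak of $\pi$ is a position $i\in\{1,\dots,n-1\}$ with $\pi(i-1)<\pi(i)>\pi(i+1)$, and $\operatorname{pe}_B(\pi)$ is the number of peaks. $\varsigma(\pi)=0$ if $\pi(1)>0$ and $\varsigma(\pi)=1$ if $\pi(1)<0$. For an integer $k\ge0$ let $Z_k$ be the totally ordered set $0<\bar1<1<\bar2<2<\dots<\bar k<k$, with $0$ and unbarred $j$ "plus-type" and barred $\bar j$ "minus-type". $\Omega'_B(\pi;k)$ is the number of sequences $(a_1,\dots,a_n)\in Z_k^n$ such that, with $a_0=0$, $a_0\le a_1\le\dots\le a_n$ and for every $s\in\{0,\dots,n-1\}$: if $\pi(s)<\pi(s+1)$ then $a_s<a_{s+1}$ or ($a_s=a_{s+1}$ is plus-type); if $\pi(s)>\pi(s+1)$ then $a_s<a_{s+1}$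 or ($a_s=a_{s+1}$ is minus-type). *)

theory Defs
  imports "HOL-Computational_Algebra.Formal_Power_Series"
begin

text \<open>Signed permutations of {-n..n}, as functions on int, extended by the identity
  outside {-n..n} so that the set of them is finite.\<close>
definition signed_perms :: "nat \<Rightarrow> (int \<Rightarrow> int) set" where
  "signed_perms n = {\<pi>. bij_betw \<pi> {-int n..int n} {-int n..int n}
                        \<and> (\<forall>i. \<pi> (-i) = - \<pi> i)
                        \<and> (\<forall>i. i \<notin> {-int n..int n} \<longrightarrow> \<pi> i = i)}"

definition peB :: "nat \<Rightarrow> (int \<Rightarrow> int) \<Rightarrow> nat" where
  "peB n \<pi> = card {i \<in> {1..int n - 1}. \<pi> (i - 1) < \<pi> i \<and> \<pi> i > \<pi> (i + 1)}"

definition varsigma :: "(int \<Rightarrow> int) \<Rightarrow> nat" where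
  "varsigma \<pi> = (if \<pi> 1 > 0 then 0 else 1)"

text \<open>The totally ordered set Z_k = 0 < bar1 < 1 < bar2 < 2 < ... < bar k < k is encoded
  order-preservingly by natural numbers {0..2k}: 0 as 0, bar j as 2j-1, j as 2j.\<close>
definition Zset :: "nat \<Rightarrow> nat set" where
  "Zset k = {0..2*k}"

definition plus_type :: "nat \<Rightarrow> bool" where
  "plus_type z = even z"

definition minus_type :: "nat \<Rightarrow> bool" where
  "minus_type z = odd z"

definition OmegaB' :: "nat \<Rightarrow> (int \<Rightarrow> int) \<Rightarrow> nat \<Rightarrow> nat" where
  "OmegaB' n \<pi> k = card {a :: nat \<Rightarrow> nat.
      a 0 = 0 \<and> (\<forall>i. n < i \<longrightarrow> a i = 0)
      \<and> (\<forall>i\<in>{1..n}. a i \<in> Zset k)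
      \<and> (\<forall>s<n. a s \<le> a (Suc s))
      \<and> (\<forall>s<n. \<pi> (int s) < \<pi> (int s + 1) \<longrightarrow> a s < a (Suc s) \<or> (a s = a (Suc s) \<and> plus_type (a s)))
      \<and> (\<forall>s<n. \<pi> (int s) > \<pi> (int s + 1) \<longrightarrow> a s < a (Suc s) \<or> (a s = a (Suc s) \<and> minus_type (a s)))}"

end

theory Submission
  imports Defs
begin


definition okstep :: "bool \<Rightarrow> nat \<Rightarrow> nat \<Rightarrow> bool" where
  "okstep b x y = (x < y \<or> (x = y \<and> (if b then odd x else even x)))"

definition Aset :: "(nat \<Rightarrow> bool) \<Rightarrow> nat \<Rightarrow> nat \<Rightarrow> (nat \<Rightarrow> nat) set" where
  "Aset d n m = {a. a 0 = 0 \<and> (\<forall>i. n < i \<longrightarrow> a i = 0) \<and> (\<forall>i\<le>n. a i < m)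
      \<and> (\<forall>s<n. okstep (d s) (a s) (a (Suc s)))}"

definition Cnt :: "(nat \<Rightarrow> bool) \<Rightarrow> nat \<Rightarrow> nat \<Rightarrow> nat" where
  "Cnt d n m = card (Aset d n m)"

lemma Aset_finite: "finite (Aset d n m)"
proof -
  have "Aset d n m \<subseteq> {f. \<forall>x. (x \<in> {..n} \<longrightarrow> f x \<in> {..<m}) \<and> (x \<notin> {..n} \<longrightarrow> f x = 0)}"
    unfolding Aset_def by auto
  then show ?thesis using finite_subset finite_set_of_finite_funs[of "{..n}" "{..<m}" 0] by blast
qed

lemma Aset_mono: assumes "a \<in> Aset d n m" "i \<le> j" "j \<le> n" shows "a i \<le> a j"
  using assms(2,3)
proof (induction j)
  case 0 then show ?case by simp
next
  case (Suc j)
  show ?case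
  proof (cases "i = Suc j")
    case False
    then have "a i \<le> a j" using Suc by simp
    moreover have "okstep (d j) (a j) (a (Suc j))" using assms(1) Suc.prems unfolding Aset_def by auto
    ultimately show ?thesis unfolding okstep_def by auto
  qed simp
qed

definition bnd :: "bool \<Rightarrow> nat \<Rightarrow> nat" where
  "bnd b y = (if (if b then odd y else even y) then Suc y else y)"

lemma Cnt_0: "Cnt d 0 m = (if m > 0 then 1 else 0)"
proof -
  have "Aset d 0 m = (if m > 0 then {\<lambda>_. 0} else {})"
  proof (cases "m > 0")
    case True
    have "a \<in> Aset d 0 m \<longleftrightarrow> a = (\<lambda>_. 0)" for a
    proof
      assume "a \<in> Aset d 0 m"
      then have "a 0 = 0" "\<forall>i>0. a i = 0" unfolding Aset_def by auto
      then show "a = (\<lambda>_. 0)" by (metis gr0I)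
    qed (use True in \<open>simp add: Aset_def\<close>)
    then show ?thesis using True by auto
  next
    case False
    then show ?thesis unfolding Aset_def by auto
  qed
  then show ?thesis unfolding Cnt_def by simp
qed

lemma Cnt_m0: "Cnt d n 0 = 0"
proof -
  have "Aset d n 0 = {}" unfolding Aset_def by auto
  then show ?thesis unfolding Cnt_def by simp
qed

lemma Aset_Suc: "Aset d (Suc n) m = (\<Union>y\<in>{..<m}. (\<lambda>a. a(Suc n := y)) ` Aset d n (bnd (d n) y))"
proof (intro equalityI subsetI)
  fix a assume a: "a \<in> Aset d (Suc n) m"
  define y where "y = a (Suc n)"
  define b where "b = a(Suc n := 0)"
  have ym: "y < m" using a unfolding Aset_def y_def by auto
  have ok: "okstep (d n) (a n) y" using a unfolding Aset_def y_def by auto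
  have an: "a n < bnd (d n) y" using ok unfolding okstep_def bnd_def by auto
  have "b \<in> Aset d n (bnd (d n) y)"
    unfolding Aset_def
  proof (intro CollectI conjI allI impI)
    show "b 0 = 0" using a unfolding Aset_def b_def by auto
    fix i assume "n < i" then show "b i = 0" using a unfolding Aset_def b_def
      by (cases "i = Suc n") auto
  next
    fix i assume "i \<le> n"
    then have "a i \<le> a n" using Aset_mono[OF a] by simp
    then show "b i < bnd (d n) y" using an \<open>i \<le> n\<close> unfolding b_def by auto
  next
    fix s assume "s < n" then show "okstep (d s) (b s) (b (Suc s))"
      using a unfolding Aset_def b_def by auto
  qed
  moreover have "a = b(Suc n := y)" unfolding b_def y_def by auto
  ultimately show "a \<in> (\<Union>y\<in>{..<m}. (\<lambda>a. a(Suc n := y)) ` Aset d n (bnd (d n) y))"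
    using ym by blast
next
  fix a assume "a \<in> (\<Union>y\<in>{..<m}. (\<lambda>a. a(Suc n := y)) ` Aset d n (bnd (d n) y))"
  then obtain y b where ym: "y < m" and b: "b \<in> Aset d n (bnd (d n) y)" and ab: "a = b(Suc n := y)"
    by blast
  have bb: "bnd (d n) y \<le> m" using ym unfolding bnd_def by auto
  have bn: "b n < bnd (d n) y" using b unfolding Aset_def by auto
  show "a \<in> Aset d (Suc n) m"
    unfolding Aset_def
  proof (intro CollectI conjI allI impI)
    show "a 0 = 0" using b unfolding Aset_def ab by auto
    fix i assume "Suc n < i" then show "a i = 0" using b unfolding Aset_def ab by auto
  next
    fix i assume i: "i \<le> Suc n" show "a i < m"
    proof (cases "i = Suc n")
      case False
      then have "i \<le> n" using i by simp
      then have "b i < bnd (d n) y" using b unfolding Aset_def by auto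
      then show ?thesis using bb False unfolding ab by simp
    qed (use ym ab in simp)
  next
    fix s assume s: "s < Suc n"
    show "okstep (d s) (a s) (a (Suc s))"
    proof (cases "s = n")
      case True
      then show ?thesis using bn unfolding ab okstep_def bnd_def by (auto simp: less_Suc_eq split: if_splits)
    next
      case False
      then show ?thesis using b s unfolding Aset_def ab by auto
    qed
  qed
qed

lemma Cnt_Suc: "Cnt d (Suc n) m = (\<Sum>y<m. Cnt d n (bnd (d n) y))"
proof -
  have inj: "inj_on (\<lambda>a. a(Suc n := y)) (Aset d n M)" for y M
  proof (rule inj_onI)
    fix a b assume a: "a \<in> Aset d n M" and b: "b \<in> Aset d n M" and e: "a(Suc n := y) = b(Suc n := y)"
    show "a = b"
    proof
      fix i show "a i = b i"
      proof (cases "i = Suc n")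
        case True
        then show ?thesis using a b unfolding Aset_def by auto
      next
        case False
        then show ?thesis using e unfolding fun_eq_iff by (metis fun_upd_other)
      qed
    qed
  qed
  have disj: "((\<lambda>a. a(Suc n := y)) ` Aset d n (bnd (d n) y)) \<inter> ((\<lambda>a. a(Suc n := z)) ` Aset d n (bnd (d n) z)) = {}"
    if "y \<noteq> z" for y z
  proof (rule ccontr)
    assume "(\<lambda>a. a(Suc n := y)) ` Aset d n (bnd (d n) y) \<inter> (\<lambda>a. a(Suc n := z)) ` Aset d n (bnd (d n) z) \<noteq> {}"
    then obtain a b where "a(Suc n := y) = b(Suc n := z)" by blast
    then have "(a(Suc n := y)) (Suc n) = (b(Suc n := z)) (Suc n)" by simp
    then show False using that by simp
  qed
  have "Cnt d (Suc n) m = (\<Sum>y<m. card ((\<lambda>a. a(Suc n := y)) ` Aset d n (bnd (d n) y)))"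
    unfolding Cnt_def Aset_Suc
    by (rule card_UN_disjoint) (simp_all add: Aset_finite disj)
  also have "\<dots> = (\<Sum>y<m. Cnt d n (bnd (d n) y))"
    unfolding Cnt_def by (rule sum.cong[OF refl], rule card_image[OF inj])
  finally show ?thesis .
qed



lemma sum_split2: "(\<Sum>y<2*(k::nat). (g::nat\<Rightarrow>nat) y) = (\<Sum>j<k. g (2*j) + g (2*j+1))"
  by (induction k) (auto simp: algebra_simps)

lemma Cnt_U:
  assumes "\<not> d n"
  shows "Cnt d (Suc n) (2*k+1) = 2*(\<Sum>j<k. Cnt d n (2*j+1)) + Cnt d n (2*k+1)"
    and "Cnt d (Suc n) (2*k) = 2*(\<Sum>j<k. Cnt d n (2*j+1))"
proof -
  have b: "bnd (d n) (2*j) = 2*j+1" "bnd (d n) (2*j+1) = 2*j+1" "bnd (d n) (Suc (2*j)) = Suc (2*j)" for j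
    using assms unfolding bnd_def by auto
  show "Cnt d (Suc n) (2*k) = 2*(\<Sum>j<k. Cnt d n (2*j+1))"
    unfolding Cnt_Suc sum_split2 b by (simp add: sum.distrib)
  show "Cnt d (Suc n) (2*k+1) = 2*(\<Sum>j<k. Cnt d n (2*j+1)) + Cnt d n (2*k+1)"
    unfolding Cnt_Suc by (simp add: sum_split2 b sum.distrib)
qed

lemma Cnt_D:
  assumes "d n"
  shows "Cnt d (Suc n) (2*k) = (\<Sum>j<k. Cnt d n (2*j)) + (\<Sum>j\<le>k. Cnt d n (2*j))"
    and "Cnt d (Suc n) (2*k+1) = 2*(\<Sum>j\<le>k. Cnt d n (2*j))"
proof -
  have b: "bnd (d n) (2*j) = 2*j" "bnd (d n) (2*j+1) = 2*(Suc j)" "bnd (d n) (Suc (2*j)) = Suc (Suc (2*j))" for j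
    using assms unfolding bnd_def by auto
  have sh: "(\<Sum>j<k. Cnt d n (2*(Suc j))) = (\<Sum>j\<le>k. Cnt d n (2*j))"
    using sum.atMost_shift[of "\<lambda>j. Cnt d n (2*j)" k] by (simp add: Cnt_m0)
  then have sh': "(\<Sum>j<k. Cnt d n (Suc (Suc (2*j)))) = (\<Sum>j\<le>k. Cnt d n (2*j))" by simp
  show "Cnt d (Suc n) (2*k) = (\<Sum>j<k. Cnt d n (2*j)) + (\<Sum>j\<le>k. Cnt d n (2*j))"
    unfolding Cnt_Suc sum_split2 b by (simp add: sum.distrib sh sh')
  have "Cnt d (Suc n) (2*k+1) = (\<Sum>j<k. Cnt d n (2*j)) + (\<Sum>j\<le>k. Cnt d n (2*j)) + Cnt d n (2*k)"
    unfolding Cnt_Suc by (simp add: sum_split2 b sum.distrib sh sh')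
  also have "\<dots> = 2*(\<Sum>j\<le>k. Cnt d n (2*j))"
    by (simp add: lessThan_Suc_atMost[symmetric])
  finally show "Cnt d (Suc n) (2*k+1) = 2*(\<Sum>j\<le>k. Cnt d n (2*j))" .
qed

lemma Cnt_U1: "\<not> d n \<Longrightarrow> Cnt d (Suc n) (Suc (2*k)) = 2*(\<Sum>j<k. Cnt d n (Suc (2*j))) + Cnt d n (Suc (2*k))"
  using Cnt_U(1)[of d n k] by simp
lemma Cnt_D1: "d n \<Longrightarrow> Cnt d (Suc n) (Suc (2*k)) = 2*(\<Sum>j\<le>k. Cnt d n (2*j))"
  using Cnt_D(2)[of d n k] by simp

lemma ones_inv: "Abs_fps (\<lambda>_. 1::real) = inverse (1 - fps_X)"
proof -
  have "inverse (inverse (Abs_fps (\<lambda>_. 1::real))) = Abs_fps (\<lambda>_. 1::real)"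
    by (rule fps_inverse_idempotent) simp
  then show ?thesis by (simp add: fps_inverse_gp')
qed

lemma fps_psum: "Abs_fps (\<lambda>k. \<Sum>j\<le>k. f j) = inverse (1 - fps_X) * Abs_fps (f :: nat \<Rightarrow> real)"
proof -
  have "Abs_fps (\<lambda>k. \<Sum>j\<le>k. f j) = Abs_fps f * Abs_fps (\<lambda>_. 1::real)"
    by (rule fps_ext) (simp add: fps_mult_nth atLeast0AtMost)
  then show ?thesis by (simp add: ones_inv mult.commute)
qed

lemma fps_psum_lt: "Abs_fps (\<lambda>k. \<Sum>j<k. f j) = fps_X * (inverse (1 - fps_X) * Abs_fps (f :: nat \<Rightarrow> real))"
proof -
  have "Abs_fps (\<lambda>k. \<Sum>j<k. f j) = fps_X * Abs_fps (\<lambda>k. \<Sum>j\<le>k. f j)"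
    by (rule fps_ext) (auto simp: lessThan_Suc_atMost[symmetric] gr0_conv_Suc)
  then show ?thesis by (simp add: fps_psum)
qed

definition Ev_gf :: "(nat \<Rightarrow> bool) \<Rightarrow> nat \<Rightarrow> real fps" where
  "Ev_gf d n = Abs_fps (\<lambda>k. real (Cnt d n (2*k+1)))"
definition Odd_gf :: "(nat \<Rightarrow> bool) \<Rightarrow> nat \<Rightarrow> real fps" where
  "Odd_gf d n = Abs_fps (\<lambda>k. real (Cnt d n (2*k)))"

abbreviation "iv \<equiv> inverse (1 - fps_X :: real fps)"

lemma Ev_gf_U: "\<not> d n \<Longrightarrow> Ev_gf d (Suc n) = (1 + fps_X) * iv * Ev_gf d n"
proof -
  assume a: "\<not> d n"
  have "Ev_gf d (Suc n) = Abs_fps (\<lambda>k. \<Sum>j\<le>k. real (Cnt d n (2*j+1))) + Abs_fps (\<lambda>k. \<Sum>j<k. real (Cnt d n (2*j+1)))"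
    unfolding Ev_gf_def by (rule fps_ext) (simp add: Cnt_U1[of d n, OF a] lessThan_Suc_atMost[symmetric])
  then show ?thesis unfolding fps_psum fps_psum_lt Ev_gf_def by (simp add: algebra_simps)
qed

lemma Odd_gf_U: "\<not> d n \<Longrightarrow> Odd_gf d (Suc n) = fps_const 2 * fps_X * iv * Ev_gf d n"
proof -
  assume a: "\<not> d n"
  have "Odd_gf d (Suc n) = fps_const 2 * Abs_fps (\<lambda>k. \<Sum>j<k. real (Cnt d n (2*j+1)))"
    unfolding Odd_gf_def by (rule fps_ext) (simp add: Cnt_U[of d n, OF a])
  then show ?thesis unfolding fps_psum_lt Ev_gf_def by (simp add: algebra_simps)
qed

lemma Ev_gf_D: "d n \<Longrightarrow> Ev_gf d (Suc n) = fps_const 2 * iv * Odd_gf d n"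
proof -
  assume a: "d n"
  have "Ev_gf d (Suc n) = fps_const 2 * Abs_fps (\<lambda>k. \<Sum>j\<le>k. real (Cnt d n (2*j)))"
    unfolding Ev_gf_def by (rule fps_ext) (simp add: Cnt_D1[of d n, OF a])
  then show ?thesis unfolding fps_psum Odd_gf_def by (simp add: algebra_simps)
qed

lemma Odd_gf_D: "d n \<Longrightarrow> Odd_gf d (Suc n) = (1 + fps_X) * iv * Odd_gf d n"
proof -
  assume a: "d n"
  have "Odd_gf d (Suc n) = Abs_fps (\<lambda>k. \<Sum>j\<le>k. real (Cnt d n (2*j))) + Abs_fps (\<lambda>k. \<Sum>j<k. real (Cnt d n (2*j)))"
    unfolding Odd_gf_def by (rule fps_ext) (simp add: Cnt_D[of d n, OF a])
  then show ?thesis unfolding fps_psum fps_psum_lt Odd_gf_def by (simp add: algebra_simps)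
qed

lemma Ev_gf_0: "Ev_gf d 0 = iv"
  unfolding Ev_gf_def by (simp add: Cnt_0 ones_inv[symmetric])

lemma Odd_gf_0: "Odd_gf d 0 = fps_X * iv"
proof -
  have "Odd_gf d 0 = fps_X * Abs_fps (\<lambda>_. 1)"
    unfolding Odd_gf_def by (rule fps_ext) (simp add: Cnt_0)
  then show ?thesis by (simp add: ones_inv)
qed



definition sig :: "(nat \<Rightarrow> bool) \<Rightarrow> nat \<Rightarrow> nat" where
  "sig d n = (if 0 < n \<and> d 0 then 1 else 0)"

definition pk :: "(nat \<Rightarrow> bool) \<Rightarrow> nat \<Rightarrow> nat" where
  "pk d n = card {i. 1 \<le> i \<and> i < n \<and> \<not> d (i-1) \<and> d i}"

lemma pk_Suc: "pk d (Suc n) = pk d n + (if 1 \<le> n \<and> \<not> d (n-1) \<and> d n then 1 else 0)"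
proof -
  have fin: "finite {i. 1 \<le> i \<and> i < n \<and> \<not> d (i-1) \<and> d i}"
    by (rule finite_subset[of _ "{..<n}"]) auto
  show ?thesis
  proof (cases "1 \<le> n \<and> \<not> d (n-1) \<and> d n")
    case True
    then have "{i. 1 \<le> i \<and> i < Suc n \<and> \<not> d (i-1) \<and> d i} = insert n {i. 1 \<le> i \<and> i < n \<and> \<not> d (i-1) \<and> d i}"
      by auto
    then show ?thesis unfolding pk_def using fin True by simp
  next
    case False
    then have "{i. 1 \<le> i \<and> i < Suc n \<and> \<not> d (i-1) \<and> d i} = {i. 1 \<le> i \<and> i < n \<and> \<not> d (i-1) \<and> d i}"
      by (auto simp: less_Suc_eq)
    then show ?thesis unfolding pk_def using False by simp
  qed
qed

abbreviation "uu \<equiv> (1 + fps_X :: real fps)"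
abbreviation "iu \<equiv> inverse (1 + fps_X :: real fps)"

lemma u_iu: "uu * iu = 1"
  by (rule inverse_mult_eq_1') simp

lemma v_iv: "(1 - fps_X) * iv = 1"
  by (rule inverse_mult_eq_1') simp

definition Tgf :: "(nat \<Rightarrow> bool) \<Rightarrow> nat \<Rightarrow> real fps" where
  "Tgf d n = uu ^ n * iv ^ (n + 1) * (2 * fps_X * iu) ^ sig d n * (4 * fps_X * iu ^ 2) ^ pk d n"

lemma half2: "fps_const (1/2::real) * 2 = 1"
  by (simp add: fps_numeral_fps_const)

lemma invariant:
  "Ev_gf d n = Tgf d n \<and>
   Odd_gf d n = (if n = 0 then fps_X * iv else if d (n-1) then fps_const (1/2) * uu * Ev_gf d n
                 else 2 * fps_X * iu * Ev_gf d n)"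
proof (induction n)
  case 0
  then show ?case by (simp add: Ev_gf_0 Odd_gf_0 Tgf_def sig_def pk_def)
next
  case (Suc n)
  have E: "Ev_gf d n = Tgf d n" using Suc.IH by simp
  show ?case
  proof (cases "d n")
    case False
    have sg: "sig d (Suc n) = sig d n" "pk d (Suc n) = pk d n"
    proof -
      have "d 0 \<Longrightarrow> 0 < n" using False by (cases n) auto
      then show "sig d (Suc n) = sig d n" "pk d (Suc n) = pk d n"
        using False by (auto simp: sig_def pk_Suc)
    qed
    have E': "Ev_gf d (Suc n) = Tgf d (Suc n)"
      unfolding Ev_gf_U[of d n, OF False] E Tgf_def sg by (simp add: mult_ac)
    have "Odd_gf d (Suc n) = 2 * fps_X * iv * Ev_gf d n"
      using Odd_gf_U[of d n, OF False] by (simp add: fps_numeral_fps_const)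
    also have "\<dots> = (uu * iu) * (2 * fps_X * iv * Ev_gf d n)" by (simp add: u_iu)
    also have "\<dots> = 2 * fps_X * iu * Ev_gf d (Suc n)"
      unfolding Ev_gf_U[of d n, OF False] by (simp add: mult_ac)
    finally show ?thesis using E' False by simp
  next
    case True
    have O': "Odd_gf d (Suc n) = fps_const (1/2) * uu * Ev_gf d (Suc n)"
    proof -
      have "fps_const (1/2) * uu * Ev_gf d (Suc n) = (fps_const (1/2) * 2) * (uu * iv * Odd_gf d n)"
        unfolding Ev_gf_D[of d n, OF True] by (simp add: mult_ac fps_numeral_fps_const)
      then have "fps_const (1/2) * uu * Ev_gf d (Suc n) = uu * iv * Odd_gf d n"
        unfolding half2 by (metis mult_1_left)
      then show ?thesis unfolding Odd_gf_D[of d n, OF True] by (rule sym)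
    qed
    have E': "Ev_gf d (Suc n) = Tgf d (Suc n)"
    proof (cases "n = 0")
      case True
      have sg: "sig d (Suc 0) = 1" "pk d (Suc 0) = 0" "sig d 0 = 0" "pk d 0 = 0"
        using \<open>d n\<close> True by (auto simp: sig_def pk_def)
      have "Ev_gf d (Suc n) = 2 * iv * (fps_X * iv)"
        unfolding Ev_gf_D[of d n, OF \<open>d n\<close>] using Suc.IH True by (simp add: fps_numeral_fps_const)
      also have "\<dots> = (uu * iu) * (2 * iv * (fps_X * iv))" by (simp add: u_iu)
      also have "\<dots> = Tgf d (Suc n)" unfolding Tgf_def True sg by (simp add: mult_ac)
      finally show ?thesis .
    next
      case False
      note n0 = False
      show ?thesis
      proof (cases "d (n-1)")
        case True
        have sg: "sig d (Suc n) = sig d n" "pk d (Suc n) = pk d n"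
          using True n0 by (auto simp: sig_def pk_Suc)
        have "Ev_gf d (Suc n) = fps_const 2 * iv * (fps_const (1/2) * uu * Ev_gf d n)"
          unfolding Ev_gf_D[of d n, OF \<open>d n\<close>] using Suc.IH True n0 by simp
        also have "\<dots> = (fps_const (1/2) * 2) * (uu * iv * Ev_gf d n)"
          by (simp add: mult_ac fps_numeral_fps_const)
        also have "\<dots> = Tgf d (Suc n)" unfolding half2 E Tgf_def sg by (simp add: mult_ac)
        finally show ?thesis .
      next
        case False
        have sg: "sig d (Suc n) = sig d n" "pk d (Suc n) = Suc (pk d n)"
          using False n0 \<open>d n\<close> by (auto simp: sig_def pk_Suc)
        have "Ev_gf d (Suc n) = fps_const 2 * iv * (2 * fps_X * iu * Ev_gf d n)"
          unfolding Ev_gf_D[of d n, OF \<open>d n\<close>] using Suc.IH False n0 by simp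
        also have "\<dots> = (uu * iu) * (4 * fps_X * iv * iu * Ev_gf d n)"
          by (simp add: u_iu mult_ac fps_numeral_fps_const)
        also have "\<dots> = Tgf d (Suc n)" unfolding E Tgf_def sg
          by (simp add: mult_ac power2_eq_square)
        finally show ?thesis .
      qed
    qed
    show ?thesis using E' O' True by simp
  qed
qed



lemma pi_facts:
  assumes "\<pi> \<in> signed_perms n"
  shows "\<pi> 0 = 0" and "\<And>i j. i \<in> {-int n..int n} \<Longrightarrow> j \<in> {-int n..int n} \<Longrightarrow> \<pi> i = \<pi> j \<Longrightarrow> i = j"
    and "\<And>i. i \<notin> {-int n..int n} \<Longrightarrow> \<pi> i = i"
proof -
  have b: "bij_betw \<pi> {-int n..int n} {-int n..int n}" and o: "\<forall>i. \<pi> (-i) = - \<pi> i"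
    and f: "\<forall>i. i \<notin> {-int n..int n} \<longrightarrow> \<pi> i = i"
    using assms unfolding signed_perms_def by auto
  show "\<pi> 0 = 0" using o by (metis add.inverse_neutral equation_minus_iff minus_equation_iff
        neg_equal_zero)
  show "\<And>i j. i \<in> {-int n..int n} \<Longrightarrow> j \<in> {-int n..int n} \<Longrightarrow> \<pi> i = \<pi> j \<Longrightarrow> i = j"
    using b unfolding bij_betw_def inj_on_def by blast
  show "\<And>i. i \<notin> {-int n..int n} \<Longrightarrow> \<pi> i = i" using f by blast
qed

lemma main_link:
  assumes "\<pi> \<in> signed_perms n"
  defines "d \<equiv> (\<lambda>s. \<pi> (int s + 1) < \<pi> (int s))"
  shows "OmegaB' n \<pi> k = Cnt d n (Suc (2*k))" and "varsigma \<pi> = sig d n" and "peB n \<pi> = pk d n"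
proof -
  note pf = pi_facts[OF assms(1)]
  have ne: "\<pi> (int s) \<noteq> \<pi> (int s + 1)" if "s < n" for s
  proof
    assume "\<pi> (int s) = \<pi> (int s + 1)"
    then have "int s = int s + 1" using pf(2)[of "int s" "int s + 1"] that by auto
    then show False by simp
  qed
  have "{a :: nat \<Rightarrow> nat.
      a 0 = 0 \<and> (\<forall>i. n < i \<longrightarrow> a i = 0)
      \<and> (\<forall>i\<in>{1..n}. a i \<in> Zset k)
      \<and> (\<forall>s<n. a s \<le> a (Suc s))
      \<and> (\<forall>s<n. \<pi> (int s) < \<pi> (int s + 1) \<longrightarrow> a s < a (Suc s) \<or> (a s = a (Suc s) \<and> plus_type (a s)))
      \<and> (\<forall>s<n. \<pi> (int s) > \<pi> (int s + 1) \<longrightarrow> a s < a (Suc s) \<or> (a s = a (Suc s) \<and> minus_type (a s)))}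
    = Aset d n (Suc (2*k))"
  proof (rule set_eqI)
    fix a :: "nat \<Rightarrow> nat"
    have st: "(a s \<le> a (Suc s) \<and> (\<pi> (int s) < \<pi> (int s + 1) \<longrightarrow> a s < a (Suc s) \<or> (a s = a (Suc s) \<and> plus_type (a s)))
         \<and> (\<pi> (int s) > \<pi> (int s + 1) \<longrightarrow> a s < a (Suc s) \<or> (a s = a (Suc s) \<and> minus_type (a s))))
         = okstep (d s) (a s) (a (Suc s))" if "s < n" for s
      using ne[OF that] unfolding okstep_def d_def plus_type_def minus_type_def
      by (cases "\<pi> (int s) < \<pi> (int s + 1)") auto
    have bd: "(a 0 = 0 \<and> (\<forall>i\<in>{1..n}. a i \<in> Zset k)) = (a 0 = 0 \<and> (\<forall>i\<le>n. a i < Suc (2*k)))"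
      unfolding Zset_def
      apply (auto simp: less_Suc_eq_le)
      subgoal for i by (cases "i = 0") auto
      done
    show "a \<in> {a. a 0 = 0 \<and> (\<forall>i. n < i \<longrightarrow> a i = 0)
      \<and> (\<forall>i\<in>{1..n}. a i \<in> Zset k)
      \<and> (\<forall>s<n. a s \<le> a (Suc s))
      \<and> (\<forall>s<n. \<pi> (int s) < \<pi> (int s + 1) \<longrightarrow> a s < a (Suc s) \<or> (a s = a (Suc s) \<and> plus_type (a s)))
      \<and> (\<forall>s<n. \<pi> (int s) > \<pi> (int s + 1) \<longrightarrow> a s < a (Suc s) \<or> (a s = a (Suc s) \<and> minus_type (a s)))}
      \<longleftrightarrow> a \<in> Aset d n (Suc (2*k))"
      unfolding Aset_def mem_Collect_eq using st bd by blast
  qed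
  then show "OmegaB' n \<pi> k = Cnt d n (Suc (2*k))" unfolding OmegaB'_def Cnt_def by simp
  show "varsigma \<pi> = sig d n"
  proof (cases "n = 0")
    case True
    then have "\<pi> 1 = 1" using pf(3)[of 1] by simp
    then show ?thesis using True unfolding varsigma_def sig_def by simp
  next
    case False
    then have "\<pi> 1 \<noteq> 0" using pf(1) pf(2)[of 1 0] by auto
    then show ?thesis using False pf(1) unfolding varsigma_def sig_def d_def by auto
  qed
  have "{i \<in> {1..int n - 1}. \<pi> (i - 1) < \<pi> i \<and> \<pi> i > \<pi> (i + 1)}
        = int ` {i. 1 \<le> i \<and> i < n \<and> \<not> d (i-1) \<and> d i}"
  proof (intro equalityI subsetI)
    fix x assume x: "x \<in> {i \<in> {1..int n - 1}. \<pi> (i - 1) < \<pi> i \<and> \<pi> i > \<pi> (i + 1)}"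
    define i where "i = nat x"
    have xi: "x = int i" "1 \<le> i" "i < n" using x unfolding i_def by auto
    have "int (i - 1) = x - 1" using xi by auto
    then have "\<not> d (i-1) \<and> d i" using x xi unfolding d_def by auto
    then show "x \<in> int ` {i. 1 \<le> i \<and> i < n \<and> \<not> d (i-1) \<and> d i}" using xi by blast
  next
    fix x assume "x \<in> int ` {i. 1 \<le> i \<and> i < n \<and> \<not> d (i-1) \<and> d i}"
    then obtain i where xi: "x = int i" "1 \<le> i" "i < n" "\<not> d (i-1)" "d i" by blast
    have e: "int (i - 1) = x - 1" using xi by auto
    have "\<pi> (x - 1) \<noteq> \<pi> x" using ne[of "i-1"] xi e by auto
    then show "x \<in> {i \<in> {1..int n - 1}. \<pi> (i - 1) < \<pi> i \<and> \<pi> i > \<pi> (i + 1)}"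
      using xi e unfolding d_def by auto
  qed
  then show "peB n \<pi> = pk d n" unfolding peB_def pk_def by (simp add: card_image)
qed

theorem theorem4p12:
  fixes n :: nat and \<pi> :: "int \<Rightarrow> int"
  assumes "\<pi> \<in> signed_perms n"
  shows "(Abs_fps (\<lambda>k. of_nat (OmegaB' n \<pi> k)) :: real fps) =
           (1 + fps_X) ^ n * inverse ((1 - fps_X) ^ (n + 1))
           * (fps_const 2 * fps_X * inverse (1 + fps_X)) ^ varsigma \<pi>
           * (fps_const 4 * fps_X * inverse ((1 + fps_X) ^ 2)) ^ peB n \<pi>
       \<and> (Abs_fps (\<lambda>k. of_nat (OmegaB' n \<pi> k)) :: real fps) =
           fps_const (1/2) ^ varsigma \<pi> * (1 + fps_X) ^ (n + varsigma \<pi>)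
           * inverse ((1 - fps_X) ^ (n + 1))
           * (fps_const 4 * fps_X * inverse ((1 + fps_X) ^ 2)) ^ (peB n \<pi> + varsigma \<pi>)"
proof -
  define d where "d = (\<lambda>s. \<pi> (int s + 1) < \<pi> (int s))"
  note L = main_link[OF assms, folded d_def]
  have A: "(Abs_fps (\<lambda>k. of_nat (OmegaB' n \<pi> k)) :: real fps) = Tgf d n"
  proof -
    have "(Abs_fps (\<lambda>k. of_nat (OmegaB' n \<pi> k)) :: real fps) = Ev_gf d n"
      unfolding Ev_gf_def L(1) by simp
    then show ?thesis using invariant[of d n] by simp
  qed
  have c2: "fps_const (2::real) = 2" "fps_const (4::real) = 4" by (simp_all add: fps_numeral_fps_const)
  have i1: "inverse ((1 - fps_X) ^ (n + 1)) = iv ^ (n + 1)" by (rule fps_inverse_power)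
  have i2: "inverse ((1 + fps_X :: real fps) ^ 2) = iu ^ 2" by (rule fps_inverse_power)
  have first: "Tgf d n = (1 + fps_X) ^ n * inverse ((1 - fps_X) ^ (n + 1))
           * (fps_const 2 * fps_X * inverse (1 + fps_X)) ^ varsigma \<pi>
           * (fps_const 4 * fps_X * inverse ((1 + fps_X) ^ 2)) ^ peB n \<pi>"
    unfolding Tgf_def L(2) L(3) c2 i1 i2 ..
  have second: "Tgf d n = fps_const (1/2) ^ varsigma \<pi> * (1 + fps_X) ^ (n + varsigma \<pi>)
           * inverse ((1 - fps_X) ^ (n + 1))
           * (fps_const 4 * fps_X * inverse ((1 + fps_X) ^ 2)) ^ (peB n \<pi> + varsigma \<pi>)"
  proof (cases "sig d n = 0")
    case True
    then show ?thesis unfolding Tgf_def L(2) L(3) c2 i1 i2 by simp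
  next
    case False
    then have s1: "sig d n = 1" unfolding sig_def by (auto split: if_splits)
    have "fps_const (1/2) ^ 1 * uu ^ (n + 1) * iv ^ (n + 1) * (4 * fps_X * iu ^ 2) ^ (pk d n + 1)
        = (fps_const (1/2) * 2) * (uu * iu) * (uu ^ n * iv ^ (n + 1) * (2 * fps_X * iu) * (4 * fps_X * iu ^ 2) ^ pk d n)"
      by (simp add: mult_ac power2_eq_square fps_numeral_fps_const)
    also have "\<dots> = uu ^ n * iv ^ (n + 1) * (2 * fps_X * iu) ^ 1 * (4 * fps_X * iu ^ 2) ^ pk d n"
      unfolding half2 u_iu by simp
    finally have eq: "fps_const (1/2) ^ 1 * uu ^ (n + 1) * iv ^ (n + 1) * (4 * fps_X * iu ^ 2) ^ (pk d n + 1)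
      = uu ^ n * iv ^ (n + 1) * (2 * fps_X * iu) ^ 1 * (4 * fps_X * iu ^ 2) ^ pk d n" .
    show ?thesis unfolding Tgf_def L(2) L(3) c2 i1 i2 s1 using eq by metis
  qed
  show ?thesis using A first second by simp
qed

end
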